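(* Let $L$ be a finite-dimensional semisimple Leibniz algebra over $\mathbb{C}$ with a decomposition $L=(\oplus_{i=1}^m\mathfrak{g}_i)\ltimes(\oplus_{k=1}^n I_k)$, where $\mathfrak{g}_1,\dots,\mathfrak{g}_m$ are simple Lie subalgebras whose direct sum is a subalgebra complementary to $I$, and $I=\oplus_{k=1}^n I_k$ is a decomposition into simple $(\oplus_{i=1}^m\mathfrak{g}_i)$-submodules. Let $\mathrm{B}\Gamma$ be the bipartite graph with vertex classes $\{I_1,\dots,I_n\}$ and $\{\mathfrak{g}_1,\dots,\mathfrak{g}_m\}$, where $I_k$ and $\mathfrak{g}_i$ are joined by an edge if and only if $[I_k,\mathfrak{g}_i]=I_k$. Then $L$ is indecomposable if and only if $\mathrm{B}\Gamma$ is connected.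
   Context: A Leibniz algebra is a vector space $L$ with a bilinear bracket satisfying $[[x,y],z]=[[x,z],y]+[x,[y,z]]$. The subspace $I=\mathrm{Span}\langle [x,x]\mid x\in L\rangle$ is an ideal with $[L,I]=0$, $\mathfrak{g}_L=L/I$ is a Lie algebra, and $L$ is semisimple if $\mathfrak{g}_L$ is semisimple; then $L$ has a subalgebra isomorphic to $\mathfrak{g}_L$ complementary to $I$, and $I$ is a module over it via the right bracket $i.g=[i,g]$. For each $k,i$ one has $[I_k,\mathfrak{g}_i]\in\{I_k,\{0\}\}$. An algebra is indecomposable if it is not a direct sum $A_1\oplus A_2$ of two proper (nonzero) ideals. *)

theory Defs
  imports Complex_Main
begin

text \<open>A Leibniz algebra over the complex numbers is modelled on a type 'v carrying an
  abelian group structure, a scalar multiplication sc (a complex vector space structure)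
  and a bracket br.\<close>

definition bilinear_bracket :: "(complex \<Rightarrow> 'v::ab_group_add \<Rightarrow> 'v) \<Rightarrow> ('v \<Rightarrow> 'v \<Rightarrow> 'v) \<Rightarrow> bool" where
  "bilinear_bracket sc br \<longleftrightarrow>
     (\<forall>x y z. br (x + y) z = br x z + br y z) \<and>
     (\<forall>x y z. br x (y + z) = br x y + br x z) \<and>
     (\<forall>a x y. br (sc a x) y = sc a (br x y)) \<and>
     (\<forall>a x y. br x (sc a y) = sc a (br x y))"

definition leibniz_algebra :: "(complex \<Rightarrow> 'v::ab_group_add \<Rightarrow> 'v) \<Rightarrow> ('v \<Rightarrow> 'v \<Rightarrow> 'v) \<Rightarrow> bool" where
  "leibniz_algebra sc br \<longleftrightarrow> vector_space sc \<and> bilinear_bracket sc br \<and>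
     (\<forall>x y z. br (br x y) z = br (br x z) y + br x (br y z))"

definition finite_dim :: "(complex \<Rightarrow> 'v::ab_group_add \<Rightarrow> 'v) \<Rightarrow> bool" where
  "finite_dim sc \<longleftrightarrow> (\<exists>B. finite B \<and> module.span sc B = UNIV)"

definition sq_ideal :: "(complex \<Rightarrow> 'v::ab_group_add \<Rightarrow> 'v) \<Rightarrow> ('v \<Rightarrow> 'v \<Rightarrow> 'v) \<Rightarrow> 'v set" where
  "sq_ideal sc br = module.span sc {br x x | x. True}"

definition brset :: "(complex \<Rightarrow> 'v::ab_group_add \<Rightarrow> 'v) \<Rightarrow> ('v \<Rightarrow> 'v \<Rightarrow> 'v) \<Rightarrow> 'v set \<Rightarrow> 'v set \<Rightarrow> 'v set" where
  "brset sc br A B = module.span sc {br a b | a b. a \<in> A \<and> b \<in> B}"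

definition subalg :: "(complex \<Rightarrow> 'v::ab_group_add \<Rightarrow> 'v) \<Rightarrow> ('v \<Rightarrow> 'v \<Rightarrow> 'v) \<Rightarrow> 'v set \<Rightarrow> bool" where
  "subalg sc br A \<longleftrightarrow> module.subspace sc A \<and> (\<forall>a\<in>A. \<forall>b\<in>A. br a b \<in> A)"

definition ideal_in :: "(complex \<Rightarrow> 'v::ab_group_add \<Rightarrow> 'v) \<Rightarrow> ('v \<Rightarrow> 'v \<Rightarrow> 'v) \<Rightarrow> 'v set \<Rightarrow> 'v set \<Rightarrow> bool" where
  "ideal_in sc br J G \<longleftrightarrow> module.subspace sc J \<and> J \<subseteq> G \<and>
     (\<forall>x\<in>J. \<forall>g\<in>G. br x g \<in> J \<and> br g x \<in> J)"

text \<open>Simple Lie subalgebra: a subalgebra on which the bracket is alternating (so it is a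
  Lie algebra), which is non-abelian and has no ideals other than 0 and itself.\<close>
definition simple_lie_subalg :: "(complex \<Rightarrow> 'v::ab_group_add \<Rightarrow> 'v) \<Rightarrow> ('v \<Rightarrow> 'v \<Rightarrow> 'v) \<Rightarrow> 'v set \<Rightarrow> bool" where
  "simple_lie_subalg sc br G \<longleftrightarrow> subalg sc br G \<and> (\<forall>x\<in>G. br x x = 0) \<and>
     (\<exists>x\<in>G. \<exists>y\<in>G. br x y \<noteq> 0) \<and>
     (\<forall>J. ideal_in sc br J G \<longrightarrow> J = {0} \<or> J = G)"

primrec derived :: "(complex \<Rightarrow> 'v::ab_group_add \<Rightarrow> 'v) \<Rightarrow> ('v \<Rightarrow> 'v \<Rightarrow> 'v) \<Rightarrow> 'v set \<Rightarrow> nat \<Rightarrow> 'v set" where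
  "derived sc br J 0 = J"
| "derived sc br J (Suc k) = brset sc br (derived sc br J k) (derived sc br J k)"

text \<open>L is semisimple iff the Lie algebra L/I is semisimple, i.e. has no nonzero solvable
  ideal.  Unfolded through the quotient: ideals of L/I are J/I for ideals J of L containing I,
  and J/I is solvable iff some derived power of J lies in I.\<close>
definition semisimple_leibniz :: "(complex \<Rightarrow> 'v::ab_group_add \<Rightarrow> 'v) \<Rightarrow> ('v \<Rightarrow> 'v \<Rightarrow> 'v) \<Rightarrow> bool" where
  "semisimple_leibniz sc br \<longleftrightarrow>
     (\<forall>J. ideal_in sc br J UNIV \<and> sq_ideal sc br \<subseteq> J \<and> (\<exists>k. derived sc br J k \<subseteq> sq_ideal sc br)
        \<longrightarrow> J = sq_ideal sc br)"

definition sumset :: "(nat \<Rightarrow> 'v::ab_group_add set) \<Rightarrow> nat \<Rightarrow> 'v set" where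
  "sumset A n = {\<Sum>i<n. x i | x. \<forall>i<n. x i \<in> A i}"

definition indep_family :: "(nat \<Rightarrow> 'v::ab_group_add set) \<Rightarrow> nat \<Rightarrow> bool" where
  "indep_family A n \<longleftrightarrow> (\<forall>x. (\<forall>i<n. x i \<in> A i) \<and> (\<Sum>i<n. x i) = 0 \<longrightarrow> (\<forall>i<n. x i = 0))"

definition submod :: "(complex \<Rightarrow> 'v::ab_group_add \<Rightarrow> 'v) \<Rightarrow> ('v \<Rightarrow> 'v \<Rightarrow> 'v) \<Rightarrow> 'v set \<Rightarrow> 'v set \<Rightarrow> bool" where
  "submod sc br S M \<longleftrightarrow> module.subspace sc M \<and> M \<subseteq> sq_ideal sc br \<and> (\<forall>x\<in>M. \<forall>s\<in>S. br x s \<in> M)"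

definition simple_submod :: "(complex \<Rightarrow> 'v::ab_group_add \<Rightarrow> 'v) \<Rightarrow> ('v \<Rightarrow> 'v \<Rightarrow> 'v) \<Rightarrow> 'v set \<Rightarrow> 'v set \<Rightarrow> bool" where
  "simple_submod sc br S M \<longleftrightarrow> submod sc br S M \<and> M \<noteq> {0} \<and>
     (\<forall>N. submod sc br S N \<and> N \<subseteq> M \<longrightarrow> N = {0} \<or> N = M)"

definition indecomposable :: "(complex \<Rightarrow> 'v::ab_group_add \<Rightarrow> 'v) \<Rightarrow> ('v \<Rightarrow> 'v \<Rightarrow> 'v) \<Rightarrow> bool" where
  "indecomposable sc br \<longleftrightarrow> \<not> (\<exists>A1 A2. ideal_in sc br A1 UNIV \<and> ideal_in sc br A2 UNIV \<and>
      A1 \<noteq> {0} \<and> A2 \<noteq> {0} \<and> A1 \<inter> A2 = {0} \<and> (\<forall>v. \<exists>a1\<in>A1. \<exists>a2\<in>A2. v = a1 + a2))"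

text \<open>Bipartite graph with vertices Inl k (k < n, the I_k) and Inr i (i < m, the g_i);
  E k i says that I_k and g_i are joined.\<close>
definition bip_vertices :: "nat \<Rightarrow> nat \<Rightarrow> (nat + nat) set" where
  "bip_vertices n m = Inl ` {..<n} \<union> Inr ` {..<m}"

fun bip_adj :: "(nat \<Rightarrow> nat \<Rightarrow> bool) \<Rightarrow> nat + nat \<Rightarrow> nat + nat \<Rightarrow> bool" where
  "bip_adj E (Inl k) (Inr i) = E k i"
| "bip_adj E (Inr i) (Inl k) = E k i"
| "bip_adj E _ _ = False"

definition bip_connected :: "nat \<Rightarrow> nat \<Rightarrow> (nat \<Rightarrow> nat \<Rightarrow> bool) \<Rightarrow> bool" where
  "bip_connected n m E \<longleftrightarrow>
     (\<forall>u\<in>bip_vertices n m. \<forall>v\<in>bip_vertices n m.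
        (\<lambda>a b. a \<in> bip_vertices n m \<and> b \<in> bip_vertices n m \<and> bip_adj E a b)\<^sup>*\<^sup>* u v)"

end

theory Submission
  imports Defs
begin


locale LS =
  fixes sc :: "complex \<Rightarrow> 'v::ab_group_add \<Rightarrow> 'v"
    and br :: "'v \<Rightarrow> 'v \<Rightarrow> 'v"
    and g :: "nat \<Rightarrow> 'v set" and m :: nat
    and Ik :: "nat \<Rightarrow> 'v set" and n :: nat
  assumes leib: "leibniz_algebra sc br"
    and gs: "\<forall>i<m. simple_lie_subalg sc br (g i)"
    and gcomm: "\<forall>i<m. \<forall>j<m. i \<noteq> j \<longrightarrow> (\<forall>x\<in>g i. \<forall>y\<in>g j. br x y = 0)"
    and gind: "indep_family g m"
    and SI: "sumset g m \<inter> sq_ideal sc br = {0}"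
    and cover: "\<forall>v. \<exists>s\<in>sumset g m. \<exists>x\<in>sq_ideal sc br. v = s + x"
    and Iks: "\<forall>k<n. simple_submod sc br (sumset g m) (Ik k)"
    and Iind: "indep_family Ik n"
    and Isum: "sumset Ik n = sq_ideal sc br"

sublocale LS \<subseteq> vector_space sc
  using leib unfolding leibniz_algebra_def by auto

context LS
begin

definition lin :: "('v \<Rightarrow> 'v) \<Rightarrow> bool" where
  "lin f \<longleftrightarrow> (\<forall>x y. f (x + y) = f x + f y) \<and> (\<forall>c x. f (sc c x) = sc c (f x))"

lemma lin_0: "lin f \<Longrightarrow> f 0 = 0"
  unfolding lin_def by (metis scale_zero_left)

lemma lin_diff: "lin f \<Longrightarrow> f (x - y) = f x - f y"
  unfolding lin_def by (metis add_diff_cancel diff_add_cancel)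

lemma lin_sum: "lin f \<Longrightarrow> f (sum h A) = (\<Sum>a\<in>A. f (h a))"
  by (induct A rule: infinite_finite_induct) (auto simp: lin_0 lin_def)

lemma lin_subspace_pre: "lin f \<Longrightarrow> subspace T \<Longrightarrow> subspace {x. f x \<in> T}"
  unfolding subspace_def lin_def by (auto simp: lin_0[unfolded lin_def])

lemma lin_kernel: "lin f \<Longrightarrow> subspace {x. f x = 0}"
  using lin_subspace_pre[of f "{0}"] by simp

lemma lin_eq_subspace: "lin f \<Longrightarrow> lin h \<Longrightarrow> subspace {x. f x = h x}"
  unfolding subspace_def lin_def by (auto simp: lin_0[unfolded lin_def])

lemma lin_span_into: "lin f \<Longrightarrow> subspace T \<Longrightarrow> (\<And>x. x \<in> B \<Longrightarrow> f x \<in> T) \<Longrightarrow> x \<in> span B \<Longrightarrow> f x \<in> T"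
  using span_subspace_induct[of x B "{x. f x \<in> T}"] lin_subspace_pre by auto

lemma lin_span_eq: "lin f \<Longrightarrow> lin h \<Longrightarrow> (\<And>x. x \<in> B \<Longrightarrow> f x = h x) \<Longrightarrow> x \<in> span B \<Longrightarrow> f x = h x"
  using span_subspace_induct[of x B "{x. f x = h x}"] lin_eq_subspace by auto

lemma lin_zero: "lin (\<lambda>x. 0)" unfolding lin_def by simp

lemma bil: "bilinear_bracket sc br"
  using leib unfolding leibniz_algebra_def by auto


lemma br_addl: "br (x + y) z = br x z + br y z" using bil unfolding bilinear_bracket_def by simp
lemma br_addr: "br z (x + y) = br z x + br z y" using bil unfolding bilinear_bracket_def by simp
lemma br_scl: "br (sc c x) z = sc c (br x z)" using bil unfolding bilinear_bracket_def by simp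
lemma br_scr: "br z (sc c x) = sc c (br z x)" using bil unfolding bilinear_bracket_def by simp
lemma lin_brl: "lin (\<lambda>x. br x y)"
  unfolding lin_def by (intro conjI allI br_addl br_scl)

lemma lin_brr: "lin (\<lambda>y. br x y)"
  unfolding lin_def by (intro conjI allI br_addr br_scr)

lemma br_0l[simp]: "br 0 z = 0" using lin_0[OF lin_brl] .
lemma br_0r[simp]: "br z 0 = 0" using lin_0[OF lin_brr] .
lemma br_diffl: "br (x - y) z = br x z - br y z" using lin_diff[OF lin_brl] .
lemma br_diffr: "br z (x - y) = br z x - br z y" using lin_diff[OF lin_brr] .
lemma br_suml: "br (sum h A) z = (\<Sum>a\<in>A. br (h a) z)" using lin_sum[OF lin_brl] .
lemma br_sumr: "br z (sum h A) = (\<Sum>a\<in>A. br z (h a))" using lin_sum[OF lin_brr] .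

lemma leib_id: "br (br x y) z = br (br x z) y + br x (br y z)"
  using leib unfolding leibniz_algebra_def by blast

lemma br_span_zero_r: assumes "y \<in> span B" "\<And>z. z \<in> B \<Longrightarrow> br x z = 0" shows "br x y = 0"
proof -
  have "subspace {y. br x y = 0}" using lin_kernel[OF lin_brr] .
  from span_subspace_induct[OF assms(1) this] show ?thesis by (simp add: assms(2))
qed

abbreviation "I \<equiv> sq_ideal sc br"

lemma subspace_I: "subspace I"
  unfolding sq_ideal_def by simp

lemma br_I_zero: assumes "y \<in> I" shows "br x y = 0"
proof -
  have "y \<in> span {br x x | x. True}" using assms unfolding sq_ideal_def .
  moreover have "\<And>z. z \<in> {br x x | x. True} \<Longrightarrow> br x z = 0"
  proof -
    fix z assume "z \<in> {br x x | x. True}"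
    then obtain w where "z = br w w" by auto
    have "br (br x w) w = br (br x w) w + br x (br w w)" by (rule leib_id)
    then have "br x (br w w) = 0" by (simp only: add_cancel_right_right)
    then show "br x z = 0" using \<open>z = br w w\<close> by (simp only:)
  qed
  ultimately show ?thesis by (rule br_span_zero_r)
qed


lemma g_sub: "i < m \<Longrightarrow> subspace (g i)"
  using gs unfolding simple_lie_subalg_def subalg_def by blast

lemma g_br: "i < m \<Longrightarrow> x \<in> g i \<Longrightarrow> y \<in> g i \<Longrightarrow> br x y \<in> g i"
  using gs unfolding simple_lie_subalg_def subalg_def by blast

lemma g_nab: "i < m \<Longrightarrow> \<exists>x\<in>g i. \<exists>y\<in>g i. br x y \<noteq> 0"
  using gs unfolding simple_lie_subalg_def by blast

lemma g_simple: "i < m \<Longrightarrow> ideal_in sc br J (g i) \<Longrightarrow> J = {0} \<or> J = g i"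
  using gs unfolding simple_lie_subalg_def by blast

lemma g_0: "i < m \<Longrightarrow> 0 \<in> g i"
  using g_sub subspace_0 by blast

lemma g_comm: "i < m \<Longrightarrow> j < m \<Longrightarrow> i \<noteq> j \<Longrightarrow> x \<in> g i \<Longrightarrow> y \<in> g j \<Longrightarrow> br x y = 0"
  using gcomm by blast

lemma I_sub: "k < n \<Longrightarrow> subspace (Ik k)"
  using Iks unfolding simple_submod_def submod_def by blast

lemma I_0: "k < n \<Longrightarrow> 0 \<in> Ik k"
  using I_sub subspace_0 by blast

lemma I_in_I: "k < n \<Longrightarrow> x \<in> Ik k \<Longrightarrow> x \<in> I"
  using Iks unfolding simple_submod_def submod_def by blast

lemma I_nz: "k < n \<Longrightarrow> Ik k \<noteq> {0}"
  using Iks unfolding simple_submod_def by blast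

lemma I_simple: "k < n \<Longrightarrow> submod sc br (sumset g m) N \<Longrightarrow> N \<subseteq> Ik k \<Longrightarrow> N = {0} \<or> N = Ik k"
  using Iks unfolding simple_submod_def by blast

lemma g_in_S: assumes "i < m" "y \<in> g i" shows "y \<in> sumset g m"
proof -
  have "(\<Sum>j<m. (if j = i then y else 0)) = y" using assms(1) by (simp add: sum.delta)
  moreover have "\<forall>j<m. (if j = i then y else 0) \<in> g j" using assms g_0 by auto
  ultimately show ?thesis unfolding sumset_def
    by (intro CollectI exI[of _ "\<lambda>j. if j = i then y else 0"]) simp
qed

lemma I_brS: "k < n \<Longrightarrow> x \<in> Ik k \<Longrightarrow> s \<in> sumset g m \<Longrightarrow> br x s \<in> Ik k"
  using Iks unfolding simple_submod_def submod_def by blast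

lemma I_brg: "k < n \<Longrightarrow> i < m \<Longrightarrow> x \<in> Ik k \<Longrightarrow> y \<in> g i \<Longrightarrow> br x y \<in> Ik k"
  using I_brS g_in_S by blast

lemma I_br0: "k < n \<Longrightarrow> y \<in> Ik k \<Longrightarrow> br x y = 0"
  using I_in_I br_I_zero by blast

definition dec_ok :: "'v \<Rightarrow> (nat \<Rightarrow> 'v) \<Rightarrow> (nat \<Rightarrow> 'v) \<Rightarrow> bool" where
  "dec_ok v s x \<longleftrightarrow> (\<forall>i<m. s i \<in> g i) \<and> (\<forall>k<n. x k \<in> Ik k) \<and> v = (\<Sum>i<m. s i) + (\<Sum>k<n. x k)"

lemma dec_ex: "\<exists>s x. dec_ok v s x"
proof -
  obtain a b where ab: "a \<in> sumset g m" "b \<in> I" "v = a + b" using cover by blast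
  from ab(1) obtain s where s: "a = (\<Sum>i<m. s i)" "\<forall>i<m. s i \<in> g i" unfolding sumset_def by blast
  from ab(2) Isum obtain x where x: "b = (\<Sum>k<n. x k)" "\<forall>k<n. x k \<in> Ik k" unfolding sumset_def by blast
  show ?thesis using s x ab(3) unfolding dec_ok_def by blast
qed

lemma dec_uniq:
  assumes "dec_ok v s x" "dec_ok v s' x'"
  shows "(\<forall>i<m. s i = s' i) \<and> (\<forall>k<n. x k = x' k)"
proof -
  have e: "(\<Sum>i<m. s i - s' i) = (\<Sum>k<n. x' k - x k)"
    using assms unfolding dec_ok_def by (simp add: sum_subtractf algebra_simps)
  have a: "(\<Sum>i<m. s i - s' i) \<in> sumset g m"
    using assms unfolding dec_ok_def sumset_def by (auto intro!: exI[of _ "\<lambda>i. s i - s' i"] subspace_diff g_sub)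
  have b: "(\<Sum>k<n. x' k - x k) \<in> sumset Ik n"
    using assms unfolding dec_ok_def sumset_def by (auto intro!: exI[of _ "\<lambda>k. x' k - x k"] subspace_diff I_sub)
  have z1: "(\<Sum>i<m. s i - s' i) = 0" using a b e SI Isum by auto
  have z2: "(\<Sum>k<n. x' k - x k) = 0" using z1 e by simp
  have "\<forall>i<m. s i - s' i = 0"
    using gind z1 assms unfolding indep_family_def dec_ok_def
    by (auto intro!: subspace_diff g_sub dest!: spec[of _ "\<lambda>i. s i - s' i"])
  moreover have "\<forall>k<n. x' k - x k = 0"
    using Iind z2 assms unfolding indep_family_def dec_ok_def
    by (auto intro!: subspace_diff I_sub dest!: spec[of _ "\<lambda>k. x' k - x k"])
  ultimately show ?thesis by auto
qed

definition dS :: "'v \<Rightarrow> nat \<Rightarrow> 'v" where "dS v = (SOME s. \<exists>x. dec_ok v s x)"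
definition dI :: "'v \<Rightarrow> nat \<Rightarrow> 'v" where "dI v = (SOME x. dec_ok v (dS v) x)"

lemma dec_dS: "dec_ok v (dS v) (dI v)"
proof -
  have "\<exists>x. dec_ok v (dS v) x" unfolding dS_def using dec_ex by (rule someI_ex)
  then show ?thesis unfolding dI_def by (rule someI_ex)
qed

definition pr :: "nat \<Rightarrow> 'v \<Rightarrow> 'v" where "pr i v = dS v i"
definition rh :: "nat \<Rightarrow> 'v \<Rightarrow> 'v" where "rh k v = dI v k"

lemma pr_eq: "dec_ok v s x \<Longrightarrow> i < m \<Longrightarrow> pr i v = s i"
  using dec_uniq[OF dec_dS] unfolding pr_def by blast

lemma rh_eq: "dec_ok v s x \<Longrightarrow> k < n \<Longrightarrow> rh k v = x k"
  using dec_uniq[OF dec_dS] unfolding rh_def by blast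

lemma pr_in: "i < m \<Longrightarrow> pr i v \<in> g i"
  using dec_dS unfolding dec_ok_def pr_def by blast

lemma rh_in: "k < n \<Longrightarrow> rh k v \<in> Ik k"
  using dec_dS unfolding dec_ok_def rh_def by blast

lemma recon: "v = (\<Sum>i<m. pr i v) + (\<Sum>k<n. rh k v)"
  using dec_dS[of v] unfolding dec_ok_def pr_def rh_def by simp

lemma dec_add: "dec_ok u s x \<Longrightarrow> dec_ok v s' x' \<Longrightarrow> dec_ok (u + v) (\<lambda>i. s i + s' i) (\<lambda>k. x k + x' k)"
  unfolding dec_ok_def by (auto simp: sum.distrib intro: subspace_add g_sub I_sub)

lemma dec_scale: "dec_ok u s x \<Longrightarrow> dec_ok (sc c u) (\<lambda>i. sc c (s i)) (\<lambda>k. sc c (x k))"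
  unfolding dec_ok_def by (auto simp: scale_sum_right scale_right_distrib intro: subspace_scale g_sub I_sub)


lemma dec_own: "dec_ok v (\<lambda>i. pr i v) (\<lambda>k. rh k v)"
  using dec_dS[of v] unfolding pr_def rh_def by (simp add: eta_contract_eq)

lemma lin_pr: "i < m \<Longrightarrow> lin (pr i)"
  unfolding lin_def using dec_add[OF dec_own dec_own] dec_scale[OF dec_own] pr_eq by metis

lemma lin_rh: "k < n \<Longrightarrow> lin (rh k)"
  unfolding lin_def using dec_add[OF dec_own dec_own] dec_scale[OF dec_own] rh_eq by metis

lemma pr_g: assumes "i < m" "j < m" "y \<in> g j" shows "pr i y = (if i = j then y else 0)"
proof -
  have "dec_ok y (\<lambda>i. if i = j then y else 0) (\<lambda>_. 0)"
    unfolding dec_ok_def using assms g_0 I_0 by (auto simp: sum.delta)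
  then show ?thesis using pr_eq assms by simp
qed

lemma rh_g: assumes "k < n" "j < m" "y \<in> g j" shows "rh k y = 0"
proof -
  have "dec_ok y (\<lambda>i. if i = j then y else 0) (\<lambda>_. 0)"
    unfolding dec_ok_def using assms g_0 I_0 by (auto simp: sum.delta)
  then show ?thesis using rh_eq assms by simp
qed

lemma pr_Ik: assumes "i < m" "k < n" "y \<in> Ik k" shows "pr i y = 0"
proof -
  have "dec_ok y (\<lambda>_. 0) (\<lambda>l. if l = k then y else 0)"
    unfolding dec_ok_def using assms g_0 I_0 by (auto simp: sum.delta)
  then show ?thesis using pr_eq assms by simp
qed

lemma rh_Ik: assumes "l < n" "k < n" "y \<in> Ik k" shows "rh l y = (if l = k then y else 0)"
proof -
  have "dec_ok y (\<lambda>_. 0) (\<lambda>l. if l = k then y else 0)"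
    unfolding dec_ok_def using assms g_0 I_0 by (auto simp: sum.delta)
  then show ?thesis using rh_eq assms by simp
qed

lemma pr_I: assumes "i < m" "y \<in> I" shows "pr i y = 0"
proof -
  from assms(2) Isum obtain x where x: "y = (\<Sum>k<n. x k)" "\<forall>k<n. x k \<in> Ik k" unfolding sumset_def by blast
  have "dec_ok y (\<lambda>_. 0) x" unfolding dec_ok_def using x g_0 by auto
  then show ?thesis using pr_eq assms by simp
qed

lemma inI: assumes "\<forall>i<m. pr i v = 0" shows "v \<in> I"
proof -
  have "v = (\<Sum>k<n. rh k v)" using recon[of v] assms by simp
  then show ?thesis using Isum rh_in unfolding sumset_def by blast
qed


lemma lin_comp: "lin f \<Longrightarrow> lin h \<Longrightarrow> lin (\<lambda>x. f (h x))"
  unfolding lin_def by simp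

lemma br_l_into: assumes "subspace T" "a \<in> span A" "\<And>x. x \<in> A \<Longrightarrow> br x b \<in> T" shows "br a b \<in> T"
proof -
  have "subspace {x. br x b \<in> T}" using lin_subspace_pre[OF lin_brl assms(1)] .
  from span_subspace_induct[OF assms(2) this] show ?thesis using assms(3) by simp
qed

lemma br_r_into: assumes "subspace T" "b \<in> span B" "\<And>y. y \<in> B \<Longrightarrow> br a y \<in> T" shows "br a b \<in> T"
proof -
  have "subspace {y. br a y \<in> T}" using lin_subspace_pre[OF lin_brr assms(1)] .
  from span_subspace_induct[OF assms(2) this] show ?thesis using assms(3) by simp
qed

lemma br_span_into: assumes "subspace T" "a \<in> span A" "b \<in> span B" "\<And>x y. x \<in> A \<Longrightarrow> y \<in> B \<Longrightarrow> br x y \<in> T"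
  shows "br a b \<in> T"
proof (rule br_l_into[OF assms(1) assms(2)])
  fix x assume "x \<in> A"
  show "br x b \<in> T" by (rule br_r_into[OF assms(1) assms(3)]) (rule assms(4)[OF \<open>x \<in> A\<close>])
qed

lemma bil_agree:
  assumes "\<And>b. lin (\<lambda>a. F a b)" "\<And>b. lin (\<lambda>a. H a b)" "\<And>a. lin (F a)" "\<And>a. lin (H a)"
    "\<And>x y. x \<in> A \<Longrightarrow> y \<in> B \<Longrightarrow> F x y = H x y" "a \<in> span A" "b \<in> span B"
  shows "F a b = H a b"
proof -
  have 1: "F x b = H x b" if "x \<in> A" for x
  proof -
    have "subspace {y. F x y = H x y}" using lin_eq_subspace[OF assms(3) assms(4)] .
    from span_subspace_induct[OF assms(7) this] show ?thesis using assms(5) that by simp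
  qed
  have "subspace {x. F x b = H x b}" using lin_eq_subspace[OF assms(1) assms(2)] .
  from span_subspace_induct[OF assms(6) this] show ?thesis using 1 by simp
qed

definition Gall :: "'v set" where "Gall = (\<Union>i<m. g i) \<union> (\<Union>k<n. Ik k)"

lemma span_Gall: "v \<in> span Gall"
proof -
  have "(\<Sum>i<m. pr i v) \<in> span Gall"
  proof (rule span_sum)
    fix i assume "i \<in> {..<m}"
    then have "pr i v \<in> Gall" using pr_in[of i v] unfolding Gall_def by blast
    then show "pr i v \<in> span Gall" by (rule span_base)
  qed
  moreover have "(\<Sum>k<n. rh k v) \<in> span Gall"
  proof (rule span_sum)
    fix i assume "i \<in> {..<n}"
    then have "rh i v \<in> Gall" using rh_in[of i v] unfolding Gall_def by blast
    then show "rh i v \<in> span Gall" by (rule span_base)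
  qed
  ultimately show ?thesis using recon[of v] span_add by metis
qed

lemma pr_hom: assumes "i < m" shows "pr i (br a b) = br (pr i a) (pr i b)"
proof (rule bil_agree[where A=Gall and B=Gall and F="\<lambda>a b. pr i (br a b)" and H="\<lambda>a b. br (pr i a) (pr i b)"])
  show "\<And>b. lin (\<lambda>a. pr i (br a b))" by (rule lin_comp[OF lin_pr[OF assms] lin_brl])
  show "\<And>b. lin (\<lambda>a. br (pr i a) (pr i b))" by (rule lin_comp[OF lin_brl lin_pr[OF assms]])
  show "\<And>a. lin (\<lambda>b. pr i (br a b))" by (rule lin_comp[OF lin_pr[OF assms] lin_brr])
  show "\<And>a. lin (\<lambda>b. br (pr i a) (pr i b))" by (rule lin_comp[OF lin_brr lin_pr[OF assms]])
  show "a \<in> span Gall" "b \<in> span Gall" by (rule span_Gall)+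
  fix x y assume x: "x \<in> Gall" and y: "y \<in> Gall"
  have p0: "pr i 0 = 0" using lin_0[OF lin_pr[OF assms]] .
  show "pr i (br x y) = br (pr i x) (pr i y)"
  proof -
    { fix j l assume j: "j < m" "x \<in> g j" and l: "l < m" "y \<in> g l"
      have ?thesis
      proof (cases "j = l")
        case True
        then have "br x y \<in> g j" using g_br j l by simp
        then show ?thesis using pr_g[OF assms j(1)] pr_g[OF assms j] pr_g[OF assms l] True by simp
      next
        case False
        then have "br x y = 0" using g_comm j l by blast
        then show ?thesis using pr_g[OF assms j] pr_g[OF assms l] p0 False by simp
      qed }
    moreover
    { fix j k assume j: "j < m" "x \<in> g j" and k: "k < n" "y \<in> Ik k"
      have ?thesis using I_br0[OF k] pr_Ik[OF assms k] p0 by simp }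
    moreover
    { fix k l assume k: "k < n" "x \<in> Ik k" and l: "l < m" "y \<in> g l"
      have "br x y \<in> Ik k" using I_brg k l by blast
      then have ?thesis using pr_Ik[OF assms k(1)] pr_Ik[OF assms k] by simp }
    moreover
    { fix k l assume k: "k < n" "x \<in> Ik k" and l: "l < n" "y \<in> Ik l"
      have ?thesis using I_br0[OF l] pr_Ik[OF assms l] p0 by simp }
    ultimately show ?thesis using x y unfolding Gall_def by blast
  qed
qed

lemma g_br_S: assumes "i < m" "y \<in> g i" "s \<in> sumset g m" shows "br y s \<in> g i"
proof -
  from assms(3) obtain t where t: "s = (\<Sum>j<m. t j)" "\<forall>j<m. t j \<in> g j" unfolding sumset_def by blast
  have "br y s = (\<Sum>j<m. br y (t j))" using t(1) br_sumr by simp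
  also have "\<dots> \<in> g i"
  proof (rule subspace_sum[OF g_sub[OF assms(1)]])
    fix j assume "j \<in> {..<m}"
    then show "br y (t j) \<in> g i"
      using t(2) g_br[OF assms(1) assms(2)] g_comm[OF assms(1), of j y "t j"] assms g_0
      by (cases "j = i") auto
  qed
  finally show ?thesis .
qed

lemma brset_sub: assumes "subspace T" "\<And>x y. x \<in> A \<Longrightarrow> y \<in> B \<Longrightarrow> br x y \<in> T" shows "brset sc br A B \<subseteq> T"
  unfolding brset_def by (rule span_minimal) (use assms in auto)

lemma brset_gen: "x \<in> A \<Longrightarrow> y \<in> B \<Longrightarrow> br x y \<in> brset sc br A B"
  unfolding brset_def by (rule span_base) auto

lemma brset_subspace: "subspace (brset sc br A B)"
  unfolding brset_def by simp

lemma brI: assumes k: "k < n" and i: "i < m"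
  shows "brset sc br (Ik k) (g i) = {0} \<or> brset sc br (Ik k) (g i) = Ik k"
proof (rule I_simple[OF k])
  let ?B = "brset sc br (Ik k) (g i)"
  show sub: "?B \<subseteq> Ik k" by (rule brset_sub[OF I_sub[OF k]]) (rule I_brg[OF k i])
  show "submod sc br (sumset g m) ?B"
    unfolding submod_def
  proof (intro conjI ballI)
    show "subspace ?B" by (rule brset_subspace)
    show "?B \<subseteq> I" using sub I_in_I[OF k] by blast
    fix x s assume x: "x \<in> ?B" and s: "s \<in> sumset g m"
    have xs: "x \<in> span {br a b | a b. a \<in> Ik k \<and> b \<in> g i}" using x unfolding brset_def .
    show "br x s \<in> ?B"
    proof (rule br_l_into[OF brset_subspace xs])
      fix z assume "z \<in> {br a b | a b. a \<in> Ik k \<and> b \<in> g i}"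
      then obtain a b where ab: "z = br a b" "a \<in> Ik k" "b \<in> g i" by blast
      have "br z s = br (br a s) b + br a (br b s)" unfolding ab(1) by (rule leib_id)
      moreover have "br (br a s) b \<in> ?B" using I_brS[OF k ab(2) s] ab(3) by (rule brset_gen)
      moreover have "br a (br b s) \<in> ?B" using ab(2) g_br_S[OF i ab(3) s] by (rule brset_gen)
      ultimately show "br z s \<in> ?B" using subspace_add[OF brset_subspace] by simp
    qed
  qed
qed

lemma perfect: assumes i: "i < m" shows "brset sc br (g i) (g i) = g i"
proof -
  let ?B = "brset sc br (g i) (g i)"
  have sub: "?B \<subseteq> g i" by (rule brset_sub[OF g_sub[OF i]]) (rule g_br[OF i])
  have "ideal_in sc br ?B (g i)"
    unfolding ideal_in_def
  proof (intro conjI ballI)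
    show "subspace ?B" by (rule brset_subspace)
    show "?B \<subseteq> g i" by (rule sub)
    fix x y assume "x \<in> ?B" "y \<in> g i"
    then have "x \<in> g i" using sub by blast
    then show "br x y \<in> ?B" "br y x \<in> ?B" using \<open>y \<in> g i\<close> brset_gen by blast+
  qed
  moreover have "?B \<noteq> {0}" using g_nab[OF i] brset_gen by blast
  ultimately show ?thesis using g_simple[OF i] by blast
qed


lemma keygen:
  assumes i: "i < m" and lf: "lin f" and hom: "\<And>a b. f (br a b) = br (f a) (f b)"
    and spl: "\<And>y z. y \<in> g i \<Longrightarrow> z \<in> g i \<Longrightarrow> br (f y) (f z) = br (f y) z"
    and z: "\<And>y. y \<in> g i \<Longrightarrow> pr i (f y) = 0"
  shows "y \<in> g i \<Longrightarrow> f y = 0"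
proof -
  have s1: "f (br y z) \<in> I" if yz: "y \<in> g i" "z \<in> g i" for y z
  proof -
    have "f (br y z) = br (f y) z" using hom spl[OF yz] by simp
    moreover have "\<forall>j<m. pr j (br (f y) z) = 0"
    proof (intro allI impI)
      fix j assume j: "j < m"
      have "pr j (br (f y) z) = br (pr j (f y)) (pr j z)" by (rule pr_hom[OF j])
      also have "\<dots> = 0"
      proof (cases "j = i")
        case True then show ?thesis using z[OF yz(1)] by simp
      next
        case False then show ?thesis using pr_g[OF j i yz(2)] by simp
      qed
      finally show "pr j (br (f y) z) = 0" .
    qed
    ultimately show ?thesis using inI by simp
  qed
  have s2: "f y \<in> I" if y: "y \<in> g i" for y
  proof -
    have "y \<in> span {br a b | a b. a \<in> g i \<and> b \<in> g i}" using y perfect[OF i] unfolding brset_def by simp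
    then show ?thesis
    proof (rule span_subspace_induct[OF _ lin_subspace_pre[OF lf subspace_I], THEN CollectD])
      fix x assume "x \<in> {br a b | a b. a \<in> g i \<and> b \<in> g i}"
      then show "x \<in> {x. f x \<in> I}" using s1 by blast
    qed
  qed
  have s3: "f (br y z) = 0" if yz: "y \<in> g i" "z \<in> g i" for y z
    using hom br_I_zero[OF s2[OF yz(2)]] by simp
  assume y: "y \<in> g i"
  have "y \<in> span {br a b | a b. a \<in> g i \<and> b \<in> g i}" using y perfect[OF i] unfolding brset_def by simp
  then show "f y = 0"
  proof (rule span_subspace_induct[OF _ lin_kernel[OF lf], THEN CollectD])
    fix x assume "x \<in> {br a b | a b. a \<in> g i \<and> b \<in> g i}"
    then show "x \<in> {x. f x = 0}" using s3 by blast
  qed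
qed

end


context LS begin
lemma ideal_img:
  assumes i: "i < m" and lf: "lin f" and lf': "lin f'"
    and sm: "\<And>y. y \<in> g i \<Longrightarrow> f y + f' y = y"
    and hom: "\<And>a b. f (br a b) = br (f a) (f b)"
    and c1: "\<And>a b. br (f a) (f' b) = 0" and c2: "\<And>a b. br (f' b) (f a) = 0"
    and inn: "\<And>y. f y \<in> g i"
  shows "ideal_in sc br (f ` g i) (g i)"
  unfolding ideal_in_def
proof (intro conjI ballI)
  show "subspace (f ` g i)"
    unfolding subspace_def
  proof (intro conjI ballI allI)
    show "0 \<in> f ` g i" using lin_0[OF lf] g_0[OF i] by (metis image_eqI)
    fix x y assume "x \<in> f ` g i" "y \<in> f ` g i"
    then obtain a b where "a \<in> g i" "b \<in> g i" "x = f a" "y = f b" by blast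
    then have "x + y = f (a + b)" "a + b \<in> g i" using lf subspace_add[OF g_sub[OF i]] unfolding lin_def by auto
    then show "x + y \<in> f ` g i" by (rule image_eqI)
  next
    fix c x assume "x \<in> f ` g i"
    then obtain a where "a \<in> g i" "x = f a" by blast
    then have "sc c x = f (sc c a)" "sc c a \<in> g i" using lf subspace_scale[OF g_sub[OF i]] unfolding lin_def by auto
    then show "sc c x \<in> f ` g i" by (rule image_eqI)
  qed
  show "f ` g i \<subseteq> g i" using inn by blast
  fix x z assume x: "x \<in> f ` g i" and zi: "z \<in> g i"
  then obtain a where a: "a \<in> g i" "x = f a" by blast
  have "br x z = br (f a) (f z + f' z)" using sm[OF zi] a by simp
  also have "\<dots> = f (br a z)" using br_addr c1 hom by simp
  finally show "br x z \<in> f ` g i" using g_br[OF i a(1) zi] by blast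
  have "br z x = br (f z + f' z) (f a)" using sm[OF zi] a by simp
  also have "\<dots> = f (br z a)" using br_addl c2 hom by simp
  finally show "br z x \<in> f ` g i" using g_br[OF i zi a(1)] by blast
qed

definition Vx :: "(nat + nat) set" where "Vx = bip_vertices n m"
definition E0 :: "nat \<Rightarrow> nat \<Rightarrow> bool" where "E0 = (\<lambda>k i. brset sc br (Ik k) (g i) = Ik k)"
definition R :: "nat + nat \<Rightarrow> nat + nat \<Rightarrow> bool" where
  "R = (\<lambda>a b. a \<in> bip_vertices n m \<and> b \<in> bip_vertices n m \<and> bip_adj E0 a b)"

lemma bip_adj_sym: "bip_adj E a b \<Longrightarrow> bip_adj E b a"
  by (cases a; cases b) auto

lemma R_sym: "R a b \<Longrightarrow> R b a"
  unfolding R_def using bip_adj_sym by blast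

lemma Vx_simps: "Inl k \<in> bip_vertices n m \<longleftrightarrow> k < n" "Inr i \<in> bip_vertices n m \<longleftrightarrow> i < m"
  unfolding bip_vertices_def by auto

definition Gen :: "(nat + nat) set \<Rightarrow> 'v set" where
  "Gen W = (\<Union>i\<in>{i. i < m \<and> Inr i \<in> W}. g i) \<union> (\<Union>k\<in>{k. k < n \<and> Inl k \<in> W}. Ik k)"

lemma Gen_gen:
  assumes cl: "\<And>a b. a \<in> W \<Longrightarrow> R a b \<Longrightarrow> b \<in> W"
    and a: "a \<in> Gen W" and b: "b \<in> Gall"
  shows "br a b \<in> span (Gen W) \<and> br b a \<in> span (Gen W)"
proof -
  { fix i j assume i: "i < m" "Inr i \<in> W" "a \<in> g i" and j: "j < m" "b \<in> g j"
    have ?thesis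
    proof (cases "i = j")
      case True
      then have "br a b \<in> Gen W" "br b a \<in> Gen W" using g_br i j unfolding Gen_def by blast+
      then show ?thesis using span_base by blast
    next
      case False
      then have "br a b = 0" "br b a = 0" using g_comm i j by metis+
      then show ?thesis using span_zero by simp
    qed }
  moreover
  { fix i k assume i: "i < m" "Inr i \<in> W" "a \<in> g i" and k: "k < n" "b \<in> Ik k"
    have 1: "br a b = 0" using I_br0[OF k] .
    have "br b a \<in> span (Gen W)"
    proof (cases "E0 k i")
      case True
      then have "R (Inr i) (Inl k)" unfolding R_def using i k Vx_simps by simp
      then have "Inl k \<in> W" using cl i by blast
      then have "br b a \<in> Gen W" using I_brg[OF k(1) i(1) k(2) i(3)] k unfolding Gen_def by blast
      then show ?thesis by (rule span_base)
    next
      case False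
      then have "brset sc br (Ik k) (g i) = {0}" using brI[OF k(1) i(1)] unfolding E0_def by blast
      then have "br b a = 0" using brset_gen[OF k(2) i(3)] by blast
      then show ?thesis using span_zero by simp
    qed
    then have ?thesis using 1 span_zero by simp }
  moreover
  { fix k j assume k: "k < n" "Inl k \<in> W" "a \<in> Ik k" and j: "j < m" "b \<in> g j"
    have "br a b \<in> Gen W" using I_brg[OF k(1) j(1) k(3) j(2)] k unfolding Gen_def by blast
    moreover have "br b a = 0" using I_br0[OF k(1) k(3)] .
    ultimately have ?thesis using span_base span_zero by simp }
  moreover
  { fix k l assume k: "k < n" "Inl k \<in> W" "a \<in> Ik k" and l: "l < n" "b \<in> Ik l"
    have "br a b = 0" "br b a = 0" using I_br0 k l by blast+
    then have ?thesis using span_zero by simp }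
  ultimately show ?thesis using a b unfolding Gen_def Gall_def by blast
qed

lemma Gen_ideal:
  assumes cl: "\<And>a b. a \<in> W \<Longrightarrow> R a b \<Longrightarrow> b \<in> W"
  shows "ideal_in sc br (span (Gen W)) UNIV"
  unfolding ideal_in_def
proof (intro conjI ballI)
  show "subspace (span (Gen W))" by simp
  show "span (Gen W) \<subseteq> UNIV" by simp
  fix x y assume x: "x \<in> span (Gen W)"
  show "br x y \<in> span (Gen W)"
  proof (rule br_span_into[OF subspace_span x span_Gall])
    fix a b assume "a \<in> Gen W" "b \<in> Gall"
    from Gen_gen[OF cl this] show "br a b \<in> span (Gen W)" by simp
  qed
  show "br y x \<in> span (Gen W)"
  proof (rule br_span_into[OF subspace_span span_Gall x])
    fix a b assume "a \<in> Gall" "b \<in> Gen W"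
    from Gen_gen[OF cl this(2) this(1)] show "br a b \<in> span (Gen W)" by simp
  qed
qed

lemma Gen_nz: assumes "w \<in> W" "w \<in> bip_vertices n m" shows "span (Gen W) \<noteq> {0}"
proof (cases w)
  case (Inl k)
  then have k: "k < n" using assms Vx_simps by simp
  obtain x where "x \<in> Ik k" "x \<noteq> 0" using I_nz[OF k] I_0[OF k] by blast
  moreover have "Ik k \<subseteq> Gen W" using k assms Inl unfolding Gen_def by blast
  ultimately show ?thesis using span_base by blast
next
  case (Inr i)
  then have i: "i < m" using assms Vx_simps by simp
  obtain x y where "x \<in> g i" "y \<in> g i" "br x y \<noteq> 0" using g_nab[OF i] by blast
  then have "x \<in> g i" "x \<noteq> 0" by auto
  moreover have "g i \<subseteq> Gen W" using i assms Inr unfolding Gen_def by blast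
  ultimately show ?thesis using span_base by blast
qed

lemma Gen_pr: assumes v: "v \<in> span (Gen W)" and i: "i < m" "Inr i \<notin> W" shows "pr i v = 0"
proof (rule span_subspace_induct[OF v lin_kernel[OF lin_pr[OF i(1)]], THEN CollectD])
  fix x assume "x \<in> Gen W"
  then consider (a) j where "j < m" "Inr j \<in> W" "x \<in> g j" | (b) k where "k < n" "x \<in> Ik k"
    unfolding Gen_def by blast
  then show "x \<in> {x. pr i x = 0}"
  proof cases
    case a then show ?thesis using pr_g[OF i(1) a(1) a(3)] i by auto
  next
    case b then show ?thesis using pr_Ik[OF i(1) b] by auto
  qed
qed

lemma Gen_rh: assumes v: "v \<in> span (Gen W)" and k: "k < n" "Inl k \<notin> W" shows "rh k v = 0"
proof (rule span_subspace_induct[OF v lin_kernel[OF lin_rh[OF k(1)]], THEN CollectD])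
  fix x assume "x \<in> Gen W"
  then consider (a) j where "j < m" "x \<in> g j" | (b) l where "l < n" "Inl l \<in> W" "x \<in> Ik l"
    unfolding Gen_def by blast
  then show "x \<in> {x. rh k x = 0}"
  proof cases
    case a then show ?thesis using rh_g[OF k(1) a] by auto
  next
    case b then show ?thesis using rh_Ik[OF k(1) b(1) b(3)] k by auto
  qed
qed

lemma Gen_disj: assumes "W1 \<inter> W2 = {}" shows "span (Gen W1) \<inter> span (Gen W2) = {0}"
proof
  show "{0} \<subseteq> span (Gen W1) \<inter> span (Gen W2)" using span_zero by blast
  show "span (Gen W1) \<inter> span (Gen W2) \<subseteq> {0}"
  proof
    fix v assume v: "v \<in> span (Gen W1) \<inter> span (Gen W2)"
    have "\<forall>i<m. pr i v = 0" using Gen_pr v assms by blast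
    moreover have "\<forall>k<n. rh k v = 0" using Gen_rh v assms by blast
    ultimately have "v = 0" using recon[of v] by simp
    then show "v \<in> {0}" by simp
  qed
qed

lemma Gen_cover: assumes "bip_vertices n m \<subseteq> W1 \<union> W2"
  shows "\<exists>a1\<in>span (Gen W1). \<exists>a2\<in>span (Gen W2). v = a1 + a2"
proof -
  have "Gall \<subseteq> Gen W1 \<union> Gen W2"
  proof
    fix x assume "x \<in> Gall"
    then consider (a) i where "i < m" "x \<in> g i" | (b) k where "k < n" "x \<in> Ik k"
      unfolding Gall_def by blast
    then show "x \<in> Gen W1 \<union> Gen W2"
    proof cases
      case a
      then have "Inr i \<in> W1 \<or> Inr i \<in> W2" using assms Vx_simps(2)[of i] by blast
      then show ?thesis using a unfolding Gen_def by blast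
    next
      case b
      then have "Inl k \<in> W1 \<or> Inl k \<in> W2" using assms Vx_simps(1)[of k] by blast
      then show ?thesis using b unfolding Gen_def by blast
    qed
  qed
  then have "v \<in> span (Gen W1 \<union> Gen W2)" using span_Gall span_mono by blast
  then show ?thesis unfolding span_Un by blast
qed

lemma easy: assumes "\<not> bip_connected n m E0" shows "\<not> indecomposable sc br"
proof -
  obtain u w where uw: "u \<in> bip_vertices n m" "w \<in> bip_vertices n m" "\<not> R\<^sup>*\<^sup>* u w"
    using assms unfolding bip_connected_def R_def by blast
  define C where "C = {v \<in> bip_vertices n m. R\<^sup>*\<^sup>* u v}"
  define D where "D = bip_vertices n m - C"
  have clC: "\<And>a b. a \<in> C \<Longrightarrow> R a b \<Longrightarrow> b \<in> C"
    unfolding C_def R_def by (auto intro: rtranclp.rtrancl_into_rtrancl[where r=R, unfolded R_def])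
  have clD: "\<And>a b. a \<in> D \<Longrightarrow> R a b \<Longrightarrow> b \<in> D"
  proof -
    fix a b assume a: "a \<in> D" and r: "R a b"
    have "b \<in> bip_vertices n m" using r unfolding R_def by blast
    moreover have "b \<notin> C"
    proof
      assume "b \<in> C"
      then have "a \<in> C" using clC R_sym[OF r] by blast
      then show False using a unfolding D_def by blast
    qed
    ultimately show "b \<in> D" unfolding D_def by blast
  qed
  have "u \<in> C" unfolding C_def using uw by simp
  have "w \<in> D" unfolding D_def C_def using uw by simp
  show ?thesis unfolding indecomposable_def not_not
  proof (intro exI conjI)
    show "ideal_in sc br (span (Gen C)) UNIV" by (rule Gen_ideal[OF clC])
    show "ideal_in sc br (span (Gen D)) UNIV" by (rule Gen_ideal[OF clD])
    show "span (Gen C) \<noteq> {0}" by (rule Gen_nz[OF \<open>u \<in> C\<close> uw(1)])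
    show "span (Gen D) \<noteq> {0}" by (rule Gen_nz[OF \<open>w \<in> D\<close> uw(2)])
    show "span (Gen C) \<inter> span (Gen D) = {0}" by (rule Gen_disj) (auto simp: D_def)
    show "\<forall>v. \<exists>a1\<in>span (Gen C). \<exists>a2\<in>span (Gen D). v = a1 + a2"
      using Gen_cover[of C D] unfolding D_def by blast
  qed
qed

end



locale DEC = LS +
  fixes A1 A2
  assumes id1: "ideal_in sc br A1 UNIV" and id2: "ideal_in sc br A2 UNIV"
    and nz1: "A1 \<noteq> {0}" and nz2: "A2 \<noteq> {0}"
    and disj: "A1 \<inter> A2 = {0}" and cov: "\<forall>v. \<exists>a1\<in>A1. \<exists>a2\<in>A2. v = a1 + a2"
begin

lemma sub1: "subspace A1" using id1 unfolding ideal_in_def by blast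
lemma sub2: "subspace A2" using id2 unfolding ideal_in_def by blast
lemma bi1: "x \<in> A1 \<Longrightarrow> br x y \<in> A1 \<and> br y x \<in> A1" using id1 unfolding ideal_in_def by blast
lemma bi2: "x \<in> A2 \<Longrightarrow> br x y \<in> A2 \<and> br y x \<in> A2" using id2 unfolding ideal_in_def by blast
lemma cross: "x \<in> A1 \<Longrightarrow> y \<in> A2 \<Longrightarrow> br x y = 0 \<and> br y x = 0"
  using bi1[of x y] bi2[of y x] bi1[of x] bi2[of y] disj by blast

definition p where "p v = (SOME a. a \<in> A1 \<and> v - a \<in> A2)"
definition q where "q v = v - p v"

lemma p_prop: "p v \<in> A1 \<and> v - p v \<in> A2"
proof -
  obtain a1 a2 where "a1 \<in> A1" "a2 \<in> A2" "v = a1 + a2" using cov by blast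
  then have "\<exists>a. a \<in> A1 \<and> v - a \<in> A2" by (intro exI[of _ a1]) simp
  then show ?thesis unfolding p_def by (rule someI_ex)
qed

lemma p_in: "p v \<in> A1" using p_prop by blast
lemma q_in: "q v \<in> A2" using p_prop unfolding q_def by blast
lemma pq: "p v + q v = v" unfolding q_def by simp

lemma p_uniq: assumes "a \<in> A1" "v - a \<in> A2" shows "p v = a"
proof -
  have "p v - a \<in> A1" using p_in assms(1) subspace_diff[OF sub1] by blast
  moreover have "(v - a) - (v - p v) \<in> A2" using assms(2) p_prop subspace_diff[OF sub2] by blast
  moreover have "(v - a) - (v - p v) = p v - a" by simp
  ultimately have "p v - a = 0" using disj by (metis IntI singletonD)
  then show ?thesis by simp
qed

lemma lin_p: "lin p"
  unfolding lin_def
proof (intro conjI allI)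
  fix x y
  show "p (x + y) = p x + p y"
  proof (rule p_uniq)
    show "p x + p y \<in> A1" using p_in subspace_add[OF sub1] by blast
    have "x + y - (p x + p y) = q x + q y" unfolding q_def by simp
    then show "x + y - (p x + p y) \<in> A2" using q_in subspace_add[OF sub2] by metis
  qed
next
  fix c x
  show "p (sc c x) = sc c (p x)"
  proof (rule p_uniq)
    show "sc c (p x) \<in> A1" using p_in subspace_scale[OF sub1] by blast
    have "sc c x - sc c (p x) = sc c (q x)" unfolding q_def by (simp add: scale_right_diff_distrib)
    then show "sc c x - sc c (p x) \<in> A2" using q_in subspace_scale[OF sub2] by metis
  qed
qed

lemma lin_q: "lin q"
  using lin_p unfolding lin_def q_def by (simp add: scale_right_diff_distrib algebra_simps)

lemma br_expand: "br a b = br (p a) (p b) + br (q a) (q b)"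
proof -
  have "br a b = br (p a + q a) (p b + q b)" using pq by simp
  also have "\<dots> = br (p a) (p b) + br (p a) (q b) + (br (q a) (p b) + br (q a) (q b))"
    by (simp add: br_addl br_addr)
  also have "br (p a) (q b) = 0" using cross[OF p_in q_in] by blast
  also have "br (q a) (p b) = 0" using cross[OF p_in q_in] by blast
  finally show ?thesis by simp
qed

lemma p_hom: "p (br a b) = br (p a) (p b)"
proof (rule p_uniq)
  show "br (p a) (p b) \<in> A1" using bi1[OF p_in] by blast
  have "br a b - br (p a) (p b) = br (q a) (q b)" using br_expand[of a b] by simp
  then show "br a b - br (p a) (p b) \<in> A2" using bi2[OF q_in] by metis
qed

lemma q_hom: "q (br a b) = br (q a) (q b)"
  unfolding q_def[of "br a b"] p_hom using br_expand[of a b] unfolding q_def by simp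

lemma p_split: "br (p y) (p z) = br (p y) z"
proof -
  have "br (p y) z = br (p y) (p z + q z)" using pq by simp
  also have "\<dots> = br (p y) (p z)" using br_addr cross[OF p_in q_in] by simp
  finally show ?thesis by simp
qed

lemma q_split: "br (q y) (q z) = br (q y) z"
proof -
  have "br (q y) z = br (q y) (p z + q z)" using pq by simp
  also have "\<dots> = br (q y) (q z)" using br_addr cross[OF p_in q_in] by simp
  finally show ?thesis by simp
qed

lemma dich: assumes i: "i < m" shows "g i \<subseteq> A1 \<or> g i \<subseteq> A2"
proof -
  define th where "th y = pr i (p y)" for y
  define th' where "th' y = pr i (q y)" for y
  have lth: "lin th" unfolding th_def by (rule lin_comp[OF lin_pr[OF i] lin_p])
  have lth': "lin th'" unfolding th'_def by (rule lin_comp[OF lin_pr[OF i] lin_q])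
  have sm: "th y + th' y = y" if "y \<in> g i" for y
  proof -
    have "th y + th' y = pr i (p y + q y)" unfolding th_def th'_def using lin_pr[OF i] unfolding lin_def by simp
    also have "\<dots> = y" using pq pr_g[OF i i that] by simp
    finally show ?thesis .
  qed
  have sm': "th' y + th y = y" if "y \<in> g i" for y using sm[OF that] by (simp add: add.commute)
  have h: "th (br a b) = br (th a) (th b)" for a b unfolding th_def using p_hom pr_hom[OF i] by simp
  have h': "th' (br a b) = br (th' a) (th' b)" for a b unfolding th'_def using q_hom pr_hom[OF i] by simp
  have c1: "br (th a) (th' b) = 0" for a b
    unfolding th_def th'_def using pr_hom[OF i, of "p a" "q b", symmetric] cross[OF p_in q_in] lin_0[OF lin_pr[OF i]] by simp
  have c2: "br (th' b) (th a) = 0" for a b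
    unfolding th_def th'_def using pr_hom[OF i, of "q b" "p a", symmetric] cross[OF p_in q_in] lin_0[OF lin_pr[OF i]] by simp
  have inn: "th y \<in> g i" "th' y \<in> g i" for y unfolding th_def th'_def using pr_in[OF i] by auto
  have J1: "ideal_in sc br (th ` g i) (g i)"
    by (rule ideal_img[OF i lth lth' sm h c1 c2 inn(1)])
  have J2: "ideal_in sc br (th' ` g i) (g i)"
    by (rule ideal_img[OF i lth' lth sm' h' c2 c1 inn(2)])
  consider "th ` g i = {0}" | "th' ` g i = {0}" | "th ` g i = g i" "th' ` g i = g i"
    using g_simple[OF i J1] g_simple[OF i J2] by blast
  then show ?thesis
  proof cases
    case 1
    have "\<forall>y\<in>g i. p y = 0"
    proof
      fix y assume y: "y \<in> g i"
      show "p y = 0"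
      proof (rule keygen[OF i lin_p p_hom])
        show "\<And>y z. br (p y) (p z) = br (p y) z" by (rule p_split)
        show "\<And>y. y \<in> g i \<Longrightarrow> pr i (p y) = 0" using 1 unfolding th_def by blast
      qed (rule y)
    qed
    then have "g i \<subseteq> A2"
    proof (intro subsetI)
      fix y assume "\<forall>y\<in>g i. p y = 0" "y \<in> g i"
      then have "q y = y" unfolding q_def by simp
      then show "y \<in> A2" using q_in[of y] by simp
    qed
    then show ?thesis by blast
  next
    case 2
    have "\<forall>y\<in>g i. q y = 0"
    proof
      fix y assume y: "y \<in> g i"
      show "q y = 0"
      proof (rule keygen[OF i lin_q q_hom])
        show "\<And>y z. br (q y) (q z) = br (q y) z" by (rule q_split)
        show "\<And>y. y \<in> g i \<Longrightarrow> pr i (q y) = 0" using 2 unfolding th'_def by blast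
      qed (rule y)
    qed
    then have "g i \<subseteq> A1"
    proof (intro subsetI)
      fix y assume "\<forall>y\<in>g i. q y = 0" "y \<in> g i"
      then have "p y = y" using pq[of y] by simp
      then show "y \<in> A1" using p_in[of y] by simp
    qed
    then show ?thesis by blast
  next
    case 3
    obtain x y where xy: "x \<in> g i" "y \<in> g i" "br x y \<noteq> 0" using g_nab[OF i] by blast
    from xy(1) 3(1) obtain a where "x = th a" by blast
    moreover from xy(2) 3(2) obtain b where "y = th' b" by (metis imageE)
    ultimately show ?thesis using c1 xy(3) by simp
  qed
qed

end



context DEC
begin

lemma edge1: assumes k: "k < n" and i: "i < m" and e: "E0 k i"
  shows "g i \<subseteq> A1 \<longleftrightarrow> Ik k \<subseteq> A1"
proof
  assume "g i \<subseteq> A1"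
  then have "brset sc br (Ik k) (g i) \<subseteq> A1" using bi1 by (intro brset_sub[OF sub1]) blast
  then show "Ik k \<subseteq> A1" using e unfolding E0_def by simp
next
  assume a: "Ik k \<subseteq> A1"
  show "g i \<subseteq> A1"
  proof (rule ccontr)
    assume "\<not> g i \<subseteq> A1"
    then have "g i \<subseteq> A2" using dich[OF i] by blast
    then have "brset sc br (Ik k) (g i) \<subseteq> {0}"
    proof (intro brset_sub[OF subspace_single_0])
      fix x y assume "x \<in> Ik k" "y \<in> g i"
      then have "x \<in> A1" "y \<in> A2" using a \<open>g i \<subseteq> A2\<close> by auto
      then show "br x y \<in> {0}" using cross by simp
    qed
    then show False using e I_nz[OF k] I_0[OF k] unfolding E0_def by blast
  qed
qed

lemma edge2: assumes k: "k < n" and i: "i < m" and e: "E0 k i"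
  shows "g i \<subseteq> A2 \<longleftrightarrow> Ik k \<subseteq> A2"
proof
  assume "g i \<subseteq> A2"
  then have "brset sc br (Ik k) (g i) \<subseteq> A2" using bi2 by (intro brset_sub[OF sub2]) blast
  then show "Ik k \<subseteq> A2" using e unfolding E0_def by simp
next
  assume a: "Ik k \<subseteq> A2"
  show "g i \<subseteq> A2"
  proof (rule ccontr)
    assume "\<not> g i \<subseteq> A2"
    then have "g i \<subseteq> A1" using dich[OF i] by blast
    then have "brset sc br (Ik k) (g i) \<subseteq> {0}"
    proof (intro brset_sub[OF subspace_single_0])
      fix x y assume "x \<in> Ik k" "y \<in> g i"
      then have "x \<in> A2" "y \<in> A1" using a \<open>g i \<subseteq> A1\<close> by auto
      then show "br x y \<in> {0}" using cross by simp
    qed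
    then show False using e I_nz[OF k] I_0[OF k] unfolding E0_def by blast
  qed
qed

definition P :: "'a set \<Rightarrow> nat + nat \<Rightarrow> bool" where
  "P A v = (case v of Inl k \<Rightarrow> Ik k \<subseteq> A | Inr i \<Rightarrow> g i \<subseteq> A)"

lemma stepP: assumes r: "R a b" and A: "A = A1 \<or> A = A2" and pa: "P A a" shows "P A b"
proof -
  have va: "a \<in> bip_vertices n m" and vb: "b \<in> bip_vertices n m" and ad: "bip_adj E0 a b"
    using r unfolding R_def by auto
  show ?thesis
  proof (cases a)
    case (Inl k)
    then obtain i where b: "b = Inr i" using ad by (cases b) auto
    have "E0 k i" using ad Inl b by simp
    moreover have kn: "k < n" and im: "i < m" using va vb Inl b Vx_simps by auto
    ultimately show ?thesis using pa A edge1[OF kn im] edge2[OF kn im] Inl b unfolding P_def by auto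
  next
    case (Inr i)
    then obtain k where b: "b = Inl k" using ad by (cases b) auto
    have "E0 k i" using ad Inr b by simp
    moreover have kn: "k < n" and im: "i < m" using va vb Inr b Vx_simps by auto
    ultimately show ?thesis using pa A edge1[OF kn im] edge2[OF kn im] Inr b unfolding P_def by auto
  qed
qed

lemma pathP: assumes "R\<^sup>*\<^sup>* a b" "A = A1 \<or> A = A2" "P A a" shows "P A b"
  using assms(1,3)
proof (induction rule: rtranclp_induct)
  case base then show ?case .
next
  case (step y z) then show ?case using stepP assms(2) by blast
qed

lemma allP: assumes A: "A = A1 \<or> A = A2" and all: "\<forall>v\<in>bip_vertices n m. P A v" shows False
proof -
  have sA: "subspace A" using A sub1 sub2 by blast
  have "Gall \<subseteq> A"
  proof
    fix x assume "x \<in> Gall"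
    then consider (a) i where "i < m" "x \<in> g i" | (b) k where "k < n" "x \<in> Ik k"
      unfolding Gall_def by blast
    then show "x \<in> A"
    proof cases
      case a
      then have "P A (Inr i)" using all Vx_simps(2)[of i] by blast
      then show ?thesis using a unfolding P_def by auto
    next
      case b
      then have "P A (Inl k)" using all Vx_simps(1)[of k] by blast
      then show ?thesis using b unfolding P_def by auto
    qed
  qed
  then have U: "\<And>x. x \<in> A" using span_Gall span_minimal[OF _ sA] by blast
  show False
  proof (cases "A = A1")
    case True
    then have "A2 \<subseteq> A1 \<inter> A2" using U by blast
    then show False using nz2 disj sub2 subspace_0 by blast
  next
    case False
    then have "A = A2" using A by blast
    then have "A1 \<subseteq> A1 \<inter> A2" using U by blast
    then show False using nz1 disj sub1 subspace_0 by blast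
  qed
qed

lemma hard: assumes conn: "bip_connected n m E0" shows False
proof (cases "m = 0")
  case False
  then have v0: "Inr 0 \<in> bip_vertices n m" using Vx_simps by simp
  have reach: "\<forall>v\<in>bip_vertices n m. R\<^sup>*\<^sup>* (Inr 0) v"
    using conn v0 unfolding bip_connected_def R_def by blast
  from dich[of 0] False have "g 0 \<subseteq> A1 \<or> g 0 \<subseteq> A2" by simp
  then obtain A where A: "A = A1 \<or> A = A2" "P A (Inr 0)" unfolding P_def by auto
  have "\<forall>v\<in>bip_vertices n m. P A v" using reach pathP[OF _ A(1) A(2)] by blast
  then show False by (rule allP[OF A(1)])
next
  case m0: True
  show False
  proof (cases "n = 0")
    case True
    then have "Gall = {}" using m0 unfolding Gall_def by simp
    have U: "span Gall = {0}" using \<open>Gall = {}\<close> by simp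
    obtain a where "a \<in> A1" "a \<noteq> 0" using nz1 sub1 subspace_0 by blast
    then show False using U span_Gall[of a] by simp
  next
    case n1: False
    show False
    proof (cases "n = 1")
      case True
      then have G: "Gall = Ik 0" using m0 unfolding Gall_def by (simp add: lessThan_Suc)
      have n0: "0 < n" using True by simp
      have sp: "span (Ik 0) = Ik 0" using I_sub[OF n0] by simp
      have U: "x \<in> Ik 0" for x using span_Gall[of x] unfolding G sp .
      have "submod sc br (sumset g m) A1"
        unfolding submod_def
      proof (intro conjI ballI)
        show "subspace A1" by (rule sub1)
        show "A1 \<subseteq> I" using U I_in_I[OF n0] by blast
        fix x s assume "x \<in> A1" then show "br x s \<in> A1" using bi1 by blast
      qed
      moreover have "A1 \<subseteq> Ik 0" using U by blast
      ultimately have "A1 = {0} \<or> A1 = Ik 0" by (rule I_simple[OF n0])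
      then show False
      proof
        assume "A1 = {0}" then show False using nz1 by blast
      next
        assume "A1 = Ik 0"
        then have "A2 \<subseteq> A1 \<inter> A2" using U by blast
        then show False using nz2 disj sub2 subspace_0 by blast
      qed
    next
      case False
      then have "Inl 0 \<in> bip_vertices n m" "Inl 1 \<in> bip_vertices n m" using n1 Vx_simps by auto
      then have "R\<^sup>*\<^sup>* (Inl 0) (Inl 1)" using conn unfolding bip_connected_def R_def by blast
      then show False
      proof (cases rule: converse_rtranclpE)
        case base then show False by simp
      next
        case (step c)
        then have "c \<in> bip_vertices n m" "bip_adj E0 (Inl 0) c" unfolding R_def by auto
        then show False using m0 Vx_simps by (cases c) auto
      qed
    qed
  qed
qed

end

theorem theorem3p5:
  fixes sc :: "complex \<Rightarrow> 'v::ab_group_add \<Rightarrow> 'v"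
    and br :: "'v \<Rightarrow> 'v \<Rightarrow> 'v"
    and g :: "nat \<Rightarrow> 'v set" and m :: nat
    and Ik :: "nat \<Rightarrow> 'v set" and n :: nat
  assumes "leibniz_algebra sc br"
    and "finite_dim sc"
    and "semisimple_leibniz sc br"
    and "\<forall>i<m. simple_lie_subalg sc br (g i)"
    and "\<forall>i<m. \<forall>j<m. i \<noteq> j \<longrightarrow> (\<forall>x\<in>g i. \<forall>y\<in>g j. br x y = 0)"
    and "indep_family g m"
    and "subalg sc br (sumset g m)"
    and "sumset g m \<inter> sq_ideal sc br = {0}"
    and "\<forall>v. \<exists>s\<in>sumset g m. \<exists>x\<in>sq_ideal sc br. v = s + x"
    and "\<forall>k<n. simple_submod sc br (sumset g m) (Ik k)"
    and "indep_family Ik n"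
    and "sumset Ik n = sq_ideal sc br"
  shows "indecomposable sc br \<longleftrightarrow>
           bip_connected n m (\<lambda>k i. brset sc br (Ik k) (g i) = Ik k)"
proof -
  interpret LS sc br g m Ik n
    by (unfold_locales) (use assms in blast)+
  have E: "(\<lambda>k i. brset sc br (Ik k) (g i) = Ik k) = E0" unfolding E0_def ..
  show ?thesis unfolding E
  proof
    assume "indecomposable sc br"
    then show "bip_connected n m E0" using easy by blast
  next
    assume c: "bip_connected n m E0"
    show "indecomposable sc br"
      unfolding indecomposable_def
    proof
      assume "\<exists>A1 A2. ideal_in sc br A1 UNIV \<and> ideal_in sc br A2 UNIV \<and>
        A1 \<noteq> {0} \<and> A2 \<noteq> {0} \<and> A1 \<inter> A2 = {0} \<and> (\<forall>v. \<exists>a1\<in>A1. \<exists>a2\<in>A2. v = a1 + a2)"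
      then obtain A1 A2 where h: "ideal_in sc br A1 UNIV" "ideal_in sc br A2 UNIV"
        "A1 \<noteq> {0}" "A2 \<noteq> {0}" "A1 \<inter> A2 = {0}" "\<forall>v. \<exists>a1\<in>A1. \<exists>a2\<in>A2. v = a1 + a2" by blast
      interpret DEC sc br g m Ik n A1 A2
        by (unfold_locales) (use h in blast)+
      show False by (rule hard[OF c])
    qed
  qed
qed


end
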